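(* Let $\{x_i,v_i\}_{i\in[N]}$ be the global solution of the delayed Cucker–Smale system described in the context, and let $K$ be the smallest integer such that $K\sigma\ge2\tau$. Then for all $i,j\in[N]$, \[ |x_j(\tau)-x_i(2\tau-\sigma)|\le\Delta^0_x+\mathcal{W}^K_\sigma\Delta^0_v, \] where $\mathcal{W}^K_\sigma:=Z^K_\sigma-(1+\sigma)(Z^{K-1}_\sigma+1)$.
   Context: Let $N\ge2$, $d\ge1$ be integers, $[N]=\{1,\dots,N\}$, $0\le\sigma\le\tau$. Let $\psi:[0,\infty)\to[0,\infty)$ be continuous, nonincreasing, positive everywhere, with $\sup\psi\le1$. Given $x_i^0\in C^1([-\tau,0],\mathbb{R}^d)$, $v_i^0\in C([-\tau,0],\mathbb{R}^d)$ with $\frac{\mathrm d}{\mathrm dt}x_i^0=v_i^0$, $\{x_i,v_i\}$ is the global solution of $\dot x_i(t)=v_i(t)$, $\dot v_i(t)=\sum_{j\ne i}a_{ij}(t)(v_j(t-\tau)-v_i(t-\sigma))$ for $t>0$, with $a_{ij}(t)=\frac1{N-1}\psi(|x_i(t-\sigma)-x_j(t-\tau)|)$, and $x_i=x_i^0$, $v_i=v_i^0$ on $[-\tau,0]$. $\Delta^0_x:=\max_{i,j}\max_{s,t\in[-\tau,0]}|x_i^0(s)-x_j^0(t)|$, $\Delta^0_v:=\max_{i,j}\max_{s,t\in[-\tau,0]}|v_i^0(s)-v_j^0(t)|$. For $k\ge0$, \[ Z^k_\sigma:=\frac{1}{2\sqrt{\sigma(1+\sigma)}}\Big[\big((1+\sigma)+\sqrt{\sigma(1+\sigma)}\big)^{k+1}-\big((1+\sigma)-\sqrt{\sigma(1+\sigma)}\big)^{k+1}\Big],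 \] a polynomial in $\sigma$; equivalently $Z^0_\sigma=1$, $Z^k_\sigma=1+(1+\sigma)Z^{k-1}_\sigma+\sigma\sum_{m=0}^{k-1}Z^m_\sigma$ for $k\ge1$. *)

theory Defs
  imports "HOL-Analysis.Analysis"
begin

text \<open>The closed-form polynomial Z^k_sigma (used here only for sigma > 0).\<close>
definition Zs :: "real \<Rightarrow> nat \<Rightarrow> real" where
  "Zs \<sigma> k = (1 / (2 * sqrt (\<sigma> * (1 + \<sigma>)))) *
     (((1 + \<sigma>) + sqrt (\<sigma> * (1 + \<sigma>))) ^ (k + 1)
      - ((1 + \<sigma>) - sqrt (\<sigma> * (1 + \<sigma>))) ^ (k + 1))"

definition Ws :: "real \<Rightarrow> nat \<Rightarrow> real" where
  "Ws \<sigma> K = Zs \<sigma> K - (1 + \<sigma>) * (Zs \<sigma> (K - 1) + 1)"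

definition diam0 :: "nat \<Rightarrow> real \<Rightarrow> (nat \<Rightarrow> real \<Rightarrow> 'a::real_normed_vector) \<Rightarrow> real" where
  "diam0 N \<tau> f = (SUP p \<in> ({1..N} \<times> {1..N}) \<times> ({-\<tau>..0} \<times> {-\<tau>..0}).
       norm (f (fst (fst p)) (fst (snd p)) - f (snd (fst p)) (snd (snd p))))"

end

theory Submission
  imports Defs
begin


lemma Zs_0: "0 < s \<Longrightarrow> Zs s 0 = 1"
proof -
  assume s: "0 < s"
  have b: "sqrt (s * (1 + s)) > 0" using s by simp
  thus ?thesis unfolding Zs_def by (simp add: field_simps)
qed

lemma Zs_1: "0 < s \<Longrightarrow> Zs s 1 = 2 + 2 * s"
proof -
  assume s: "0 < s"
  have b: "sqrt (s * (1 + s)) > 0" using s by simp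
  thus ?thesis unfolding Zs_def by (simp add: field_simps power2_eq_square)
qed

lemma Zs_rec: "0 < s \<Longrightarrow> Zs s (k + 2) = 2 * (1 + s) * Zs s (k + 1) - (1 + s) * Zs s k"
proof -
  assume s: "0 < s"
  define b where "b = sqrt (s * (1 + s))"
  have b: "b > 0" using s by (simp add: b_def)
  have bb: "b * b = s * (1 + s)" using s unfolding b_def by simp 
  have r1: "(1 + s + b) ^ (k + 3) = 2 * (1 + s) * (1 + s + b) ^ (k + 2) - (1 + s) * (1 + s + b) ^ (k + 1)"
  proof -
    have "(1 + s + b) ^ 2 = 2 * (1 + s) * (1 + s + b) - (1 + s)" using bb by (simp add: power2_eq_square algebra_simps)
    hence "(1 + s + b) ^ (k+1) * (1 + s + b) ^ 2 = (1 + s + b) ^ (k+1) * (2 * (1 + s) * (1 + s + b) - (1 + s))" by simp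
    thus ?thesis by (simp add: power_add[symmetric] algebra_simps numeral_eq_Suc)
  qed
  have r2: "(1 + s - b) ^ (k + 3) = 2 * (1 + s) * (1 + s - b) ^ (k + 2) - (1 + s) * (1 + s - b) ^ (k + 1)"
  proof -
    have "(1 + s - b) ^ 2 = 2 * (1 + s) * (1 + s - b) - (1 + s)" using bb by (simp add: power2_eq_square algebra_simps)
    hence "(1 + s - b) ^ (k+1) * (1 + s - b) ^ 2 = (1 + s - b) ^ (k+1) * (2 * (1 + s) * (1 + s - b) - (1 + s))" by simp
    thus ?thesis by (simp add: power_add[symmetric] algebra_simps numeral_eq_Suc)
  qed
  have e: "k + 2 + 1 = k + 3" "k + 1 + 1 = k + 2" by simp_all
  show ?thesis unfolding Zs_def b_def[symmetric] e r1 r2 using b by (simp add: field_simps)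
qed

lemma Zs_sumrec: "0 < s \<Longrightarrow> Zs s (Suc k) = 1 + (1 + s) * Zs s k + s * (\<Sum>m\<le>k. Zs s m)"
proof (induction k rule: nat_less_induct)
  case (1 k)
  show ?case
  proof (cases k)
    case 0 thus ?thesis using 1(2) Zs_0 Zs_1 by simp
  next
    case (Suc k')
    have ih: "Zs s (Suc k') = 1 + (1 + s) * Zs s k' + s * (\<Sum>m\<le>k'. Zs s m)" using 1 Suc by simp
    have rec: "Zs s (k' + 2) = 2 * (1 + s) * Zs s (k' + 1) - (1 + s) * Zs s k'" using Zs_rec 1(2) by blast
    show ?thesis using ih rec Suc by (simp add: algebra_simps)
  qed
qed

lemma Zs_ge: "0 < s \<Longrightarrow> (1 + 2 * s) ^ k \<le> Zs s k"
proof (induction k)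
  case 0 thus ?case using Zs_0 by simp
next
  case (Suc k)
  have nn: "\<And>m. 0 \<le> Zs s m"
  proof -
    fix m
    show "0 \<le> Zs s m"
    proof (induction m rule: nat_less_induct)
      case (1 m) show ?case
      proof (cases m)
        case 0 thus ?thesis using Zs_0 Suc(2) by simp
      next
        case (Suc m')
        have "0 \<le> (\<Sum>l\<le>m'. Zs s l)" using 1 Suc by (intro sum_nonneg) auto
        moreover have "0 \<le> Zs s m'" using 1 Suc by auto
        ultimately show ?thesis using Zs_sumrec[of s m'] Suc \<open>0 < s\<close> by simp
      qed
    qed
  qed
  have "Zs s k \<le> (\<Sum>m\<le>k. Zs s m)" using nn by (intro member_le_sum) auto
  hence "(1 + 2 * s) * Zs s k \<le> Zs s (Suc k)" using Zs_sumrec[of s k] Suc nn[of k]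
    by (simp add: algebra_simps) (smt (verit) mult_left_mono)
  moreover have "(1 + 2 * s) * (1 + 2 * s) ^ k \<le> (1 + 2 * s) * Zs s k" using Suc by simp
  ultimately show ?case by simp
qed

lemma Ws_eq: "0 < s \<Longrightarrow> 1 \<le> K \<Longrightarrow> Ws s K = s * (\<Sum>m\<in>{1..K-1}. Zs s m)"
proof -
  assume s: "0 < s" and K: "1 \<le> K"
  obtain k where k: "K = Suc k" using K by (cases K) auto
  have "(\<Sum>m\<le>k. Zs s m) = Zs s 0 + (\<Sum>m\<in>{1..k}. Zs s m)"
    by (simp add: atMost_atLeast0 sum.atLeast_Suc_atMost)
  thus ?thesis unfolding Ws_def k using Zs_sumrec[OF s, of k] Zs_0[OF s] by (simp add: algebra_simps)
qed



lemma mvb: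
  fixes f :: "real \<Rightarrow> 'a::real_inner"
  assumes ab: "a \<le> b" and c: "continuous_on {a..b} f"
    and d: "\<And>x. a < x \<Longrightarrow> x < b \<Longrightarrow> (f has_vector_derivative f' x) (at x)"
    and B: "\<And>x. a < x \<Longrightarrow> x < b \<Longrightarrow> norm (f' x) \<le> B"
  shows "norm (f b - f a) \<le> B * (b - a)"
proof (cases "a = b")
  case True thus ?thesis by simp
next
  case False
  hence "a < b" using ab by simp
  from mvt_general[OF this c, of "\<lambda>x h. h *\<^sub>R f' x"] d
  obtain x where x: "x \<in> {a<..<b}" "norm (f b - f a) \<le> norm ((b - a) *\<^sub>R f' x)"
    unfolding has_vector_derivative_def by blast
  have "norm ((b - a) *\<^sub>R f' x) = (b - a) * norm (f' x)" using ab by simp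
  also have "\<dots> \<le> (b - a) * B" using B[of x] x(1) ab by (intro mult_left_mono) auto
  finally have "norm ((b - a) *\<^sub>R f' x) \<le> (b - a) * B" .
  thus ?thesis using x(2) by (simp add: mult.commute)
qed

lemma mvb2:
  fixes f :: "real \<Rightarrow> 'a::real_inner"
  assumes ab: "a \<le> b" and c: "continuous_on {a..b} f"
    and d: "\<And>x. a < x \<Longrightarrow> x < b \<Longrightarrow> x \<noteq> e \<Longrightarrow> (f has_vector_derivative f' x) (at x)"
    and B: "\<And>x. a < x \<Longrightarrow> x < b \<Longrightarrow> norm (f' x) \<le> B"
  shows "norm (f b - f a) \<le> B * (b - a)"
proof (cases "a < e \<and> e < b")
  case False thus ?thesis using mvb[OF ab c, of f' B] d B by force
next
  case True
  have 1: "norm (f e - f a) \<le> B * (e - a)"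
    using True d B by (intro mvb[of a e f f' B] continuous_on_subset[OF c]) auto
  have 2: "norm (f b - f e) \<le> B * (b - e)"
    using True d B by (intro mvb[of e b f f' B] continuous_on_subset[OF c]) auto
  have "norm (f b - f a) \<le> norm (f b - f e) + norm (f e - f a)" using norm_triangle_ineq[of "f b - f e" "f e - f a"] by simp
  also have "\<dots> \<le> B * (b - a)" using 1 2 by (simp add: algebra_simps)
  finally show ?thesis .
qed

lemma diam_le:
  fixes f :: "nat \<Rightarrow> real \<Rightarrow> 'a::real_normed_vector"
  assumes c: "\<And>i. i \<in> {1..N} \<Longrightarrow> continuous_on {-\<tau>..0} (f i)"
    and i: "i \<in> {1..N}" and j: "j \<in> {1..N}" and s: "s \<in> {-\<tau>..0}" and t: "t \<in> {-\<tau>..0}"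
  shows "norm (f i s - f j t) \<le> diam0 N \<tau> f"
proof -
  have "\<forall>i\<in>{1..N}. \<exists>B. \<forall>s\<in>{-\<tau>..0}. norm (f i s) \<le> B"
  proof
    fix i assume "i \<in> {1..N}"
    from continuous_on_compact_bound[OF compact_Icc c[OF this]]
    show "\<exists>B. \<forall>s\<in>{-\<tau>..0}. norm (f i s) \<le> B" by metis
  qed
  then obtain B where B: "\<And>i s. i \<in> {1..N} \<Longrightarrow> s \<in> {-\<tau>..0} \<Longrightarrow> norm (f i s) \<le> B i"
    by metis
  define M where "M = (\<Sum>i\<in>{1..N}. \<bar>B i\<bar>)"
  have M: "\<And>i s. i \<in> {1..N} \<Longrightarrow> s \<in> {-\<tau>..0} \<Longrightarrow> norm (f i s) \<le> M"
  proof -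
    fix i s assume a: "i \<in> {1..N}" "s \<in> {-\<tau>..0}"
    have "B i \<le> \<bar>B i\<bar>" by simp
    also have "\<bar>B i\<bar> \<le> M" unfolding M_def using a by (intro member_le_sum) auto
    finally show "norm (f i s) \<le> M" using B[OF a] by simp
  qed
  have bdd: "bdd_above ((\<lambda>p. norm (f (fst (fst p)) (fst (snd p)) - f (snd (fst p)) (snd (snd p))))
      ` (({1..N} \<times> {1..N}) \<times> ({-\<tau>..0} \<times> {-\<tau>..0})))"
  proof (rule bdd_aboveI2)
    fix p assume p: "p \<in> ({1..N} \<times> {1..N}) \<times> ({-\<tau>..0} \<times> {-\<tau>..0})"
    have "norm (f (fst (fst p)) (fst (snd p)) - f (snd (fst p)) (snd (snd p)))
      \<le> norm (f (fst (fst p)) (fst (snd p))) + norm (f (snd (fst p)) (snd (snd p)))"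
      by (rule norm_triangle_ineq4)
    also have "\<dots> \<le> M + M" using p by (intro add_mono M) auto
    finally show "norm (f (fst (fst p)) (fst (snd p)) - f (snd (fst p)) (snd (snd p))) \<le> M + M" .
  qed
  show ?thesis unfolding diam0_def
    using cSUP_upper[OF _ bdd, of "((i, j), (s, t))"] i j s t by auto
qed




theorem lemma4p5:
  fixes N :: nat and \<sigma> \<tau> :: real and \<psi> :: "real \<Rightarrow> real"
    and x0 v0 x v :: "nat \<Rightarrow> real \<Rightarrow> real ^ 'd"
  assumes N2: "N \<ge> 2"
    and sigma_pos: "0 < \<sigma>" and sigma_le_tau: "\<sigma> \<le> \<tau>"
    and psi_cont: "continuous_on {0..} \<psi>"
    and psi_noninc: "\<And>r s. 0 \<le> r \<Longrightarrow> r \<le> s \<Longrightarrow> \<psi> s \<le> \<psi> r"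
    and psi_pos: "\<And>r. 0 \<le> r \<Longrightarrow> 0 < \<psi> r"
    and psi_le1: "\<And>r. 0 \<le> r \<Longrightarrow> \<psi> r \<le> 1"
    and x0_deriv: "\<And>i t. i \<in> {1..N} \<Longrightarrow> t \<in> {-\<tau>..0} \<Longrightarrow>
        (x0 i has_vector_derivative v0 i t) (at t within {-\<tau>..0})"
    and v0_cont: "\<And>i. i \<in> {1..N} \<Longrightarrow> continuous_on {-\<tau>..0} (v0 i)"
    and x_init: "\<And>i t. i \<in> {1..N} \<Longrightarrow> t \<in> {-\<tau>..0} \<Longrightarrow> x i t = x0 i t"
    and v_init: "\<And>i t. i \<in> {1..N} \<Longrightarrow> t \<in> {-\<tau>..0} \<Longrightarrow> v i t = v0 i t"
    and x_cont: "\<And>i. i \<in> {1..N} \<Longrightarrow> continuous_on {-\<tau>..} (x i)"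
    and v_cont: "\<And>i. i \<in> {1..N} \<Longrightarrow> continuous_on {-\<tau>..} (v i)"
    and x_ode: "\<And>i t. i \<in> {1..N} \<Longrightarrow> t > 0 \<Longrightarrow>
        (x i has_vector_derivative v i t) (at t)"
    and v_ode: "\<And>i t. i \<in> {1..N} \<Longrightarrow> t > 0 \<Longrightarrow>
        (v i has_vector_derivative
           (\<Sum>j\<in>{1..N} - {i}.
              ((1 / (real N - 1)) * \<psi> (norm (x i (t - \<sigma>) - x j (t - \<tau>))))
                *\<^sub>R (v j (t - \<tau>) - v i (t - \<sigma>)))) (at t)"
    and K_def: "K = (LEAST k::nat. real k * \<sigma> \<ge> 2 * \<tau>)"
  shows "\<forall>i\<in>{1..N}. \<forall>j\<in>{1..N}.
           norm (x j \<tau> - x i (2 * \<tau> - \<sigma>)) \<le> diam0 N \<tau> x0 + Ws \<sigma> K * diam0 N \<tau> v0"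
  proof -
  have tau_pos: "0 < \<tau>" using sigma_pos sigma_le_tau by simp
  have N1: "1 \<le> N" using N2 by simp
  have Npos: "real N - 1 > 0" using N2 by simp
  define D where "D = diam0 N \<tau> v0"
  define X where "X = diam0 N \<tau> x0"
  have Dv: "\<And>i j s t. i \<in> {1..N} \<Longrightarrow> j \<in> {1..N} \<Longrightarrow> s \<in> {-\<tau>..0} \<Longrightarrow> t \<in> {-\<tau>..0}
      \<Longrightarrow> norm (v i s - v j t) \<le> D"
  proof -
    fix i j s t assume a: "i \<in> {1..N}" "j \<in> {1..N}" "s \<in> {-\<tau>..0}" "t \<in> {-\<tau>..0}"
    have "norm (v0 i s - v0 j t) \<le> diam0 N \<tau> v0" using a by (intro diam_le[OF v0_cont])
    thus "norm (v i s - v j t) \<le> D" unfolding D_def using a v_init by simp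
  qed
  have x0c: "\<And>i. i \<in> {1..N} \<Longrightarrow> continuous_on {-\<tau>..0} (x0 i)"
  proof -
    fix i assume i: "i \<in> {1..N}"
    have "continuous_on {-\<tau>..0} (x i)" by (rule continuous_on_subset[OF x_cont[OF i]]) auto
    thus "continuous_on {-\<tau>..0} (x0 i)" using x_init[OF i] by (rule continuous_on_eq) auto
  qed
  have Xx: "\<And>i j s t. i \<in> {1..N} \<Longrightarrow> j \<in> {1..N} \<Longrightarrow> s \<in> {-\<tau>..0} \<Longrightarrow> t \<in> {-\<tau>..0}
      \<Longrightarrow> norm (x i s - x j t) \<le> X"
  proof -
    fix i j s t assume a: "i \<in> {1..N}" "j \<in> {1..N}" "s \<in> {-\<tau>..0}" "t \<in> {-\<tau>..0}"
    have "norm (x0 i s - x0 j t) \<le> diam0 N \<tau> x0" using a by (intro diam_le[OF x0c])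
    thus "norm (x i s - x j t) \<le> X" unfolding X_def using a x_init by simp
  qed
  have D0: "0 \<le> D" using Dv[of 1 1 0 0] N1 tau_pos by simp
  have vel: "\<forall>i\<in>{1..N}. \<forall>j\<in>{1..N}. \<forall>s\<in>{-\<tau>..real k * \<sigma>}. \<forall>t\<in>{-\<tau>..real k * \<sigma>}.
      norm (v i s - v j t) \<le> (1 + 2 * \<sigma>) ^ k * D" for k
  proof (induction k)
    case 0 thus ?case using Dv by simp
  next
    case (Suc k)
    define B where "B = (1 + 2 * \<sigma>) ^ k * D"
    have B0: "0 \<le> B" unfolding B_def using D0 sigma_pos by simp
    have IH: "\<And>i j s t. i \<in> {1..N} \<Longrightarrow> j \<in> {1..N} \<Longrightarrow> s \<in> {-\<tau>..real k * \<sigma>} \<Longrightarrow>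
        t \<in> {-\<tau>..real k * \<sigma>} \<Longrightarrow> norm (v i s - v j t) \<le> B"
      using Suc unfolding B_def by blast
    have dv: "norm (\<Sum>j\<in>{1..N} - {i}.
              ((1 / (real N - 1)) * \<psi> (norm (x i (u - \<sigma>) - x j (u - \<tau>))))
                *\<^sub>R (v j (u - \<tau>) - v i (u - \<sigma>))) \<le> B"
      if i: "i \<in> {1..N}" and u1: "real k * \<sigma> < u" and u2: "u < real k * \<sigma> + \<sigma>" for i u
    proof -
      have "0 \<le> real k * \<sigma>" using sigma_pos by simp
      hence u0: "0 < u" using u1 by linarith
      have "norm (\<Sum>j\<in>{1..N} - {i}.
              ((1 / (real N - 1)) * \<psi> (norm (x i (u - \<sigma>) - x j (u - \<tau>))))
                *\<^sub>R (v j (u - \<tau>) - v i (u - \<sigma>)))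
        \<le> (\<Sum>j\<in>{1..N} - {i}. norm (((1 / (real N - 1)) * \<psi> (norm (x i (u - \<sigma>) - x j (u - \<tau>))))
                *\<^sub>R (v j (u - \<tau>) - v i (u - \<sigma>))))" by (rule norm_sum)
      also have "\<dots> \<le> (\<Sum>j\<in>{1..N} - {i}. (1 / (real N - 1)) * B)"
      proof (rule sum_mono)
        fix j assume j: "j \<in> {1..N} - {i}"
        let ?p = "\<psi> (norm (x i (u - \<sigma>) - x j (u - \<tau>)))"
        have p0: "0 \<le> ?p" using psi_pos[of "norm (x i (u - \<sigma>) - x j (u - \<tau>))"] by simp
        have p1: "?p \<le> 1" using psi_le1 by simp
        have nv: "norm (v j (u - \<tau>) - v i (u - \<sigma>)) \<le> B"
          using j i u0 u1 u2 sigma_le_tau by (intro IH) auto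
        have "norm (((1 / (real N - 1)) * ?p) *\<^sub>R (v j (u - \<tau>) - v i (u - \<sigma>)))
           = ((1 / (real N - 1)) * ?p) * norm (v j (u - \<tau>) - v i (u - \<sigma>))"
          using p0 Npos by simp
        also have "\<dots> \<le> ((1 / (real N - 1)) * 1) * B"
          using p0 p1 Npos nv B0 by (intro mult_mono) auto
        finally show "norm (((1 / (real N - 1)) * ?p) *\<^sub>R (v j (u - \<tau>) - v i (u - \<sigma>)))
           \<le> (1 / (real N - 1)) * B" by simp
      qed
      also have "\<dots> = B" using i Npos N1 by (simp add: of_nat_diff)
      finally show ?thesis .
    qed
    have step: "norm (v i s - v i (min s (real k * \<sigma>))) \<le> \<sigma> * B"
      if i: "i \<in> {1..N}" and s: "s \<in> {-\<tau>..real (Suc k) * \<sigma>}" for i s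
    proof (cases "s \<le> real k * \<sigma>")
      case True thus ?thesis using B0 sigma_pos by simp
    next
      case False
      have "norm (v i s - v i (real k * \<sigma>)) \<le> B * (s - real k * \<sigma>)"
      proof (rule mvb)
        show "real k * \<sigma> \<le> s" using False by simp
        have "0 \<le> real k * \<sigma>" using sigma_pos by simp
        thus "continuous_on {real k * \<sigma>..s} (v i)"
          using tau_pos by (intro continuous_on_subset[OF v_cont[OF i]]) auto
        fix u assume u: "real k * \<sigma> < u" "u < s"
        have "0 \<le> real k * \<sigma>" using sigma_pos by simp
        hence u0: "0 < u" using u by linarith
        show "(v i has_vector_derivative (\<Sum>j\<in>{1..N} - {i}.
              ((1 / (real N - 1)) * \<psi> (norm (x i (u - \<sigma>) - x j (u - \<tau>))))
                *\<^sub>R (v j (u - \<tau>) - v i (u - \<sigma>)))) (at u)" using v_ode[OF i u0] .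
        show "norm (\<Sum>j\<in>{1..N} - {i}.
              ((1 / (real N - 1)) * \<psi> (norm (x i (u - \<sigma>) - x j (u - \<tau>))))
                *\<^sub>R (v j (u - \<tau>) - v i (u - \<sigma>))) \<le> B"
          using u s by (intro dv[OF i]) (auto simp: algebra_simps)
      qed
      moreover have "B * (s - real k * \<sigma>) \<le> \<sigma> * B"
      proof -
        have "s - real k * \<sigma> \<le> \<sigma>" using s by (simp add: algebra_simps)
        hence "B * (s - real k * \<sigma>) \<le> B * \<sigma>" using B0 by (rule mult_left_mono)
        thus ?thesis by (simp add: mult.commute)
      qed
      ultimately show ?thesis using False by simp
    qed
    show ?case
    proof (intro ballI)
      fix i j s t assume i: "i \<in> {1..N}" and j: "j \<in> {1..N}"
        and s: "s \<in> {-\<tau>..real (Suc k) * \<sigma>}" and t: "t \<in> {-\<tau>..real (Suc k) * \<sigma>}"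
      have "0 \<le> real k * \<sigma>" using sigma_pos by simp
      hence km: "-\<tau> \<le> real k * \<sigma>" using tau_pos by linarith
      have m: "norm (v i (min s (real k * \<sigma>)) - v j (min t (real k * \<sigma>))) \<le> B"
        using s t km by (intro IH[OF i j]) auto
      have h1: "norm (v i s - v j (min t (real k * \<sigma>))) \<le> \<sigma> * B + B"
        by (rule norm_diff_triangle_le[OF step[OF i s] m])
      have h2: "norm (v j (min t (real k * \<sigma>)) - v j t) \<le> \<sigma> * B"
        using step[OF j t] by (simp add: norm_minus_commute)
      have "norm (v i s - v j t) \<le> \<sigma> * B + B + \<sigma> * B"
        by (rule norm_diff_triangle_le[OF h1 h2])
      thus "norm (v i s - v j t) \<le> (1 + 2 * \<sigma>) ^ Suc k * D"
        unfolding B_def by (simp add: algebra_simps)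
    qed
  qed
  obtain n :: nat where n: "2 * \<tau> / \<sigma> \<le> real n" using real_arch_simple by blast
  hence "2 * \<tau> \<le> real n * \<sigma>" using sigma_pos by (simp add: pos_divide_le_eq)
  hence KL: "2 * \<tau> \<le> real K * \<sigma>" unfolding K_def by (rule LeastI)
  have K1: "1 \<le> K"
  proof (rule ccontr)
    assume "\<not> 1 \<le> K" hence "K = 0" by simp
    thus False using KL tau_pos by simp
  qed
  have Km: "2 * \<tau> - \<sigma> \<le> real (K - 1) * \<sigma>" using KL K1 by (simp add: of_nat_diff algebra_simps)
  show ?thesis
  proof (intro ballI)
    fix i j assume i: "i \<in> {1..N}" and j: "j \<in> {1..N}"
    define g where "g u = x j (u + \<sigma> - \<tau>) - x i u" for u
    have gc: "continuous_on {a..b} g" if ab: "0 \<le> a" for a b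
    proof -
      have c1: "continuous_on {a..b} (\<lambda>u. x j (u + \<sigma> - \<tau>))"
        using ab sigma_pos
        by (intro continuous_on_compose2[OF x_cont[OF j], of _ "\<lambda>u. u + \<sigma> - \<tau>"] continuous_intros) auto
      have c2: "continuous_on {a..b} (x i)"
        using ab tau_pos by (intro continuous_on_subset[OF x_cont[OF i]]) auto
      show ?thesis unfolding g_def using c1 c2 by (rule continuous_on_diff)
    qed
    have xjd: "(x j has_vector_derivative v j w) (at w)" if w: "-\<tau> < w" "w \<noteq> 0" for w
    proof (cases "0 < w")
      case True thus ?thesis using x_ode[OF j] by blast
    next
      case False
      hence w0: "w < 0" using w by simp
      have "(x0 j has_vector_derivative v0 j w) (at w within {-\<tau>..0})"
        using x0_deriv[OF j] w w0 by simp
      hence "(x0 j has_vector_derivative v0 j w) (at w)"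
        using at_within_interior[of w "{-\<tau>..0}"] w w0 by simp
      hence "(x j has_vector_derivative v0 j w) (at w)"
        by (rule has_vector_derivative_transform_within_open[of _ _ _ "{-\<tau><..<0}"])
           (use w w0 x_init[OF j] in auto)
      thus ?thesis using v_init[OF j, of w] w w0 by simp
    qed
    have gd: "(g has_vector_derivative (v j (u + \<sigma> - \<tau>) - v i u)) (at u)"
      if u: "0 < u" "u \<noteq> \<tau> - \<sigma>" for u
    proof -
      have f: "((\<lambda>u. u + \<sigma> - \<tau>) has_vector_derivative 1) (at u)"
        by (auto intro!: derivative_eq_intros)
      have "((x j \<circ> (\<lambda>u. u + \<sigma> - \<tau>)) has_vector_derivative (1 *\<^sub>R v j (u + \<sigma> - \<tau>))) (at u)"
        using u sigma_pos by (intro vector_diff_chain_at[OF f] xjd) auto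
      hence "((\<lambda>u. x j (u + \<sigma> - \<tau>)) has_vector_derivative v j (u + \<sigma> - \<tau>)) (at u)"
        by (simp add: o_def)
      thus ?thesis unfolding g_def using x_ode[OF i u(1)] by (rule has_vector_derivative_diff)
    qed
    have ind: "\<forall>t\<in>{0..2 * \<tau> - \<sigma>}. t \<le> real m * \<sigma> \<longrightarrow>
        norm (g t - g 0) \<le> \<sigma> * (\<Sum>l\<in>{1..m}. (1 + 2 * \<sigma>) ^ l) * D" for m
    proof (induction m)
      case 0 show ?case by auto
    next
      case (Suc m)
      show ?case
      proof (intro ballI impI)
        fix t assume t: "t \<in> {0..2 * \<tau> - \<sigma>}" and tm: "t \<le> real (Suc m) * \<sigma>"
        have sum_eq: "(\<Sum>l\<in>{1..Suc m}. (1 + 2 * \<sigma>) ^ l) = (\<Sum>l\<in>{1..m}. (1 + 2 * \<sigma>) ^ l) + (1 + 2 * \<sigma>) ^ Suc m"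
          by simp
        have tpos: "0 \<le> \<sigma> * (1 + 2 * \<sigma>) ^ Suc m * D" using sigma_pos D0 by simp
        show "norm (g t - g 0) \<le> \<sigma> * (\<Sum>l\<in>{1..Suc m}. (1 + 2 * \<sigma>) ^ l) * D"
        proof (cases "t \<le> real m * \<sigma>")
          case True
          hence "norm (g t - g 0) \<le> \<sigma> * (\<Sum>l\<in>{1..m}. (1 + 2 * \<sigma>) ^ l) * D" using Suc t by blast
          thus ?thesis unfolding sum_eq using tpos by (simp add: algebra_simps)
        next
          case False
          define t' where "t' = real m * \<sigma>"
          have t'0: "0 \<le> t'" unfolding t'_def using sigma_pos by simp
          have t't: "t' < t" using False unfolding t'_def by simp
          have IH: "norm (g t' - g 0) \<le> \<sigma> * (\<Sum>l\<in>{1..m}. (1 + 2 * \<sigma>) ^ l) * D"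
            using Suc t t'0 t't unfolding t'_def by auto
          have "norm (g t - g t') \<le> ((1 + 2 * \<sigma>) ^ Suc m * D) * (t - t')"
          proof (rule mvb2[where e = "\<tau> - \<sigma>"])
            show "t' \<le> t" using t't by simp
            show "continuous_on {t'..t} g" using t'0 by (rule gc)
            fix u assume u: "t' < u" "u < t"
            show "u \<noteq> \<tau> - \<sigma> \<Longrightarrow> (g has_vector_derivative (v j (u + \<sigma> - \<tau>) - v i u)) (at u)"
              using u t'0 by (intro gd) auto
            show "norm (v j (u + \<sigma> - \<tau>) - v i u) \<le> (1 + 2 * \<sigma>) ^ Suc m * D"
            proof -
              have m1: "u + \<sigma> - \<tau> \<in> {-\<tau>..real (Suc m) * \<sigma>}" "u \<in> {-\<tau>..real (Suc m) * \<sigma>}"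
                using u t'0 t tm sigma_le_tau tau_pos sigma_pos by auto
              show ?thesis using vel[of "Suc m"] i j m1 by blast
            qed
          qed
          also have "\<dots> \<le> \<sigma> * (1 + 2 * \<sigma>) ^ Suc m * D"
          proof -
            have "t - t' \<le> \<sigma>" using tm unfolding t'_def by (simp add: algebra_simps)
            hence "((1 + 2 * \<sigma>) ^ Suc m * D) * (t - t') \<le> ((1 + 2 * \<sigma>) ^ Suc m * D) * \<sigma>"
              using D0 sigma_pos by (intro mult_left_mono) auto
            thus ?thesis by (simp add: algebra_simps)
          qed
          finally have A: "norm (g t - g t') \<le> \<sigma> * (1 + 2 * \<sigma>) ^ Suc m * D" .
          have "norm (g t - g 0) \<le> \<sigma> * (1 + 2 * \<sigma>) ^ Suc m * D + \<sigma> * (\<Sum>l\<in>{1..m}. (1 + 2 * \<sigma>) ^ l) * D"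
            by (rule norm_diff_triangle_le[OF A IH])
          thus ?thesis unfolding sum_eq by (simp add: algebra_simps)
        qed
      qed
    qed
    have tend: "2 * \<tau> - \<sigma> \<in> {0..2 * \<tau> - \<sigma>}" using sigma_le_tau sigma_pos by simp
    have main: "norm (g (2 * \<tau> - \<sigma>) - g 0) \<le> \<sigma> * (\<Sum>l\<in>{1..K-1}. (1 + 2 * \<sigma>) ^ l) * D"
      using ind[of "K - 1"] tend Km by blast
    have "\<sigma> * (\<Sum>l\<in>{1..K-1}. (1 + 2 * \<sigma>) ^ l) \<le> \<sigma> * (\<Sum>l\<in>{1..K-1}. Zs \<sigma> l)"
      using sigma_pos Zs_ge[OF sigma_pos] by (intro mult_left_mono sum_mono) auto
    also have "\<dots> = Ws \<sigma> K" using Ws_eq[OF sigma_pos K1] by simp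
    finally have W: "\<sigma> * (\<Sum>l\<in>{1..K-1}. (1 + 2 * \<sigma>) ^ l) * D \<le> Ws \<sigma> K * D"
      using D0 by (rule mult_right_mono)
    have g0: "norm (g 0) \<le> X" unfolding g_def using Xx[OF j i] sigma_le_tau sigma_pos by simp
    have "norm (g (2 * \<tau> - \<sigma>)) \<le> X + Ws \<sigma> K * D"
      using norm_triangle_ineq[of "g 0" "g (2 * \<tau> - \<sigma>) - g 0"] main W g0 by simp
    moreover have "g (2 * \<tau> - \<sigma>) = x j \<tau> - x i (2 * \<tau> - \<sigma>)" unfolding g_def by simp
    ultimately show "norm (x j \<tau> - x i (2 * \<tau> - \<sigma>)) \<le> diam0 N \<tau> x0 + Ws \<sigma> K * diam0 N \<tau> v0"
      unfolding X_def D_def by simp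
  qed
qed

end
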